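(* Let $\tilde{A}\in\mathbb{Q}^{q\times n}$, $\tilde{b}\in\mathbb{Q}^q$ be the constraint data of the LP relaxation $P=\{x:\tilde{A}x\ge\tilde{b}\}=\{x: Ax\ge b,\ x\ge 0,\ x_j\le 1,\ j=1,\dots,p\}$ ($q=m+n+p$, $Q=\{1,\dots,q\}$), and let $T$ be a finite index set with $D^t\in\mathbb{Q}^{r\times n}$, $d_0^t\in\mathbb{Q}^r$ for $t\in T$. Let $\bar{w}=(\bar{\alpha},\bar{\beta},\{\bar{u}^t,\bar{v}^t\}_{t\in T})$ be a feasible solution of the CGLP system that is not basic, and suppose the submatrix $\tilde{A}_N$ of $\tilde{A}$ with rows indexed by $N=N(\bar{u}):=\{j\in Q:\bar{u}^t_j>0\text{ for some }t\in T\}$ has full row rank. Then the inequality $\bar{\alpha}x\ge\bar{\beta}$ is valid for the closure of regular cuts.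
   Context: The CGLP system consists of variables $\alpha\in\mathbb{R}^n$, $\beta\in\mathbb{R}$, $u^t\in\mathbb{R}^q$, $v^t\in\mathbb{R}^r$ ($t\in T$) and constraints: $\alpha-u^t\tilde{A}-v^tD^t=0$ and $\beta-u^t\tilde{b}-v^td_0^t=0$ for all $t\in T$; $\sum_{t\in T}\sum_{i=1}^q u^t_i+\sum_{t\in T}\sum_{i=1}^r v^t_i=1$; $u^t,v^t\ge 0$ for all $t\in T$. A basic feasible solution of this system is regular if there exists $J\subseteq Q$, $|J|=n$, with the $n\times n$ submatrix $\tilde{A}_J$ nonsingular and $u^t_j=0$ for all $j\notin J$, $t\in T$. A cut $\alpha x\ge\beta$ is regular if there is a regular basic feasible solution of the CGLP system whose $(\alpha,\beta)$-component equals $(\alpha,\beta)$ up to a positive scalar multiple. The closure of regular cuts is the set of points $x\in P$ satisfying every regular cut. *)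

theory Defs
  imports Main "HOL.Real"
begin

text \<open>Vectors are functions nat \<Rightarrow> real with explicit dimensions (indices start at 0);
  matrices are functions nat \<Rightarrow> nat \<Rightarrow> real (row, column).\<close>

text \<open>The constraint matrix of P = {x. A x \<ge> b, x \<ge> 0, x_j \<le> 1 (j < p)} written as
  At x \<ge> bt with q = m + n + p rows: rows of A, then the unit rows e_j, then the rows -e_j (j<p).\<close>

definition Atil :: "nat \<Rightarrow> nat \<Rightarrow> nat \<Rightarrow> (nat \<Rightarrow> nat \<Rightarrow> real) \<Rightarrow> nat \<Rightarrow> nat \<Rightarrow> real" where
  "Atil m n p A i j =
     (if i < m then A i j
      else if i < m + n then (if j = i - m then 1 else 0)
      else if i < m + n + p then (if j = i - m - n then -1 else 0)
      else 0)"

definition btil :: "nat \<Rightarrow> nat \<Rightarrow> nat \<Rightarrow> (nat \<Rightarrow> real) \<Rightarrow> nat \<Rightarrow> real" where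
  "btil m n p b i =
     (if i < m then b i
      else if i < m + n then 0
      else if i < m + n + p then -1
      else 0)"

text \<open>Feasibility for the CGLP system. The point (alpha, beta, u, v) is represented canonically:
  components outside the index ranges are zero.\<close>

definition cglp_feasible ::
  "nat \<Rightarrow> nat \<Rightarrow> (nat \<Rightarrow> nat \<Rightarrow> real) \<Rightarrow> (nat \<Rightarrow> real) \<Rightarrow> nat \<Rightarrow> 'a set
   \<Rightarrow> ('a \<Rightarrow> nat \<Rightarrow> nat \<Rightarrow> real) \<Rightarrow> ('a \<Rightarrow> nat \<Rightarrow> real)
   \<Rightarrow> (nat \<Rightarrow> real) \<Rightarrow> real \<Rightarrow> ('a \<Rightarrow> nat \<Rightarrow> real) \<Rightarrow> ('a \<Rightarrow> nat \<Rightarrow> real) \<Rightarrow> bool" where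
  "cglp_feasible n q At bt r T D d0 \<alpha> \<beta> u v \<longleftrightarrow>
     (\<forall>j. n \<le> j \<longrightarrow> \<alpha> j = 0) \<and>
     (\<forall>t i. t \<notin> T \<or> q \<le> i \<longrightarrow> u t i = 0) \<and>
     (\<forall>t i. t \<notin> T \<or> r \<le> i \<longrightarrow> v t i = 0) \<and>
     (\<forall>t\<in>T. \<forall>j<n. \<alpha> j - (\<Sum>i<q. u t i * At i j) - (\<Sum>i<r. v t i * D t i j) = 0) \<and>
     (\<forall>t\<in>T. \<beta> - (\<Sum>i<q. u t i * bt i) - (\<Sum>i<r. v t i * d0 t i) = 0) \<and>
     (\<Sum>t\<in>T. \<Sum>i<q. u t i) + (\<Sum>t\<in>T. \<Sum>i<r. v t i) = 1 \<and>
     (\<forall>t\<in>T. \<forall>i<q. 0 \<le> u t i) \<and>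
     (\<forall>t\<in>T. \<forall>i<r. 0 \<le> v t i)"

text \<open>Basic feasible solution: feasible, and the constraints active at the point
  (all equations and the tight nonnegativity constraints) have rank equal to the number
  of variables, i.e. the homogeneous system of active constraints has only the trivial solution.\<close>

definition cglp_basic ::
  "nat \<Rightarrow> nat \<Rightarrow> (nat \<Rightarrow> nat \<Rightarrow> real) \<Rightarrow> (nat \<Rightarrow> real) \<Rightarrow> nat \<Rightarrow> 'a set
   \<Rightarrow> ('a \<Rightarrow> nat \<Rightarrow> nat \<Rightarrow> real) \<Rightarrow> ('a \<Rightarrow> nat \<Rightarrow> real)
   \<Rightarrow> (nat \<Rightarrow> real) \<Rightarrow> real \<Rightarrow> ('a \<Rightarrow> nat \<Rightarrow> real) \<Rightarrow> ('a \<Rightarrow> nat \<Rightarrow> real) \<Rightarrow> bool" where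
  "cglp_basic n q At bt r T D d0 \<alpha> \<beta> u v \<longleftrightarrow>
     cglp_feasible n q At bt r T D d0 \<alpha> \<beta> u v \<and>
     (\<forall>da db du dv.
        (\<forall>j. n \<le> j \<longrightarrow> da j = 0) \<and>
        (\<forall>t i. t \<notin> T \<or> q \<le> i \<longrightarrow> du t i = 0) \<and>
        (\<forall>t i. t \<notin> T \<or> r \<le> i \<longrightarrow> dv t i = 0) \<and>
        (\<forall>t\<in>T. \<forall>j<n. da j - (\<Sum>i<q. du t i * At i j) - (\<Sum>i<r. dv t i * D t i j) = 0) \<and>
        (\<forall>t\<in>T. db - (\<Sum>i<q. du t i * bt i) - (\<Sum>i<r. dv t i * d0 t i) = 0) \<and>
        (\<Sum>t\<in>T. \<Sum>i<q. du t i) + (\<Sum>t\<in>T. \<Sum>i<r. dv t i) = 0 \<and>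
        (\<forall>t\<in>T. \<forall>i<q. u t i = 0 \<longrightarrow> du t i = 0) \<and>
        (\<forall>t\<in>T. \<forall>i<r. v t i = 0 \<longrightarrow> dv t i = 0)
      \<longrightarrow> (\<forall>j. da j = 0) \<and> db = 0 \<and> (\<forall>t i. du t i = 0) \<and> (\<forall>t i. dv t i = 0))"

definition rows_nonsingular :: "nat \<Rightarrow> (nat \<Rightarrow> nat \<Rightarrow> real) \<Rightarrow> nat set \<Rightarrow> bool" where
  "rows_nonsingular n At J \<longleftrightarrow>
     card J = n \<and> (\<forall>x. (\<forall>i\<in>J. (\<Sum>j<n. At i j * x j) = 0) \<longrightarrow> (\<forall>j<n. x j = 0))"

definition full_row_rank :: "nat \<Rightarrow> (nat \<Rightarrow> nat \<Rightarrow> real) \<Rightarrow> nat set \<Rightarrow> bool" where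
  "full_row_rank n At N \<longleftrightarrow>
     (\<forall>c. (\<forall>j<n. (\<Sum>i\<in>N. c i * At i j) = 0) \<longrightarrow> (\<forall>i\<in>N. c i = 0))"

definition cglp_regular_bfs ::
  "nat \<Rightarrow> nat \<Rightarrow> (nat \<Rightarrow> nat \<Rightarrow> real) \<Rightarrow> (nat \<Rightarrow> real) \<Rightarrow> nat \<Rightarrow> 'a set
   \<Rightarrow> ('a \<Rightarrow> nat \<Rightarrow> nat \<Rightarrow> real) \<Rightarrow> ('a \<Rightarrow> nat \<Rightarrow> real)
   \<Rightarrow> (nat \<Rightarrow> real) \<Rightarrow> real \<Rightarrow> ('a \<Rightarrow> nat \<Rightarrow> real) \<Rightarrow> ('a \<Rightarrow> nat \<Rightarrow> real) \<Rightarrow> bool" where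
  "cglp_regular_bfs n q At bt r T D d0 \<alpha> \<beta> u v \<longleftrightarrow>
     cglp_basic n q At bt r T D d0 \<alpha> \<beta> u v \<and>
     (\<exists>J. J \<subseteq> {..<q} \<and> card J = n \<and> rows_nonsingular n At J \<and>
          (\<forall>t\<in>T. \<forall>j<q. j \<notin> J \<longrightarrow> u t j = 0))"

definition regular_cut ::
  "nat \<Rightarrow> nat \<Rightarrow> (nat \<Rightarrow> nat \<Rightarrow> real) \<Rightarrow> (nat \<Rightarrow> real) \<Rightarrow> nat \<Rightarrow> 'a set
   \<Rightarrow> ('a \<Rightarrow> nat \<Rightarrow> nat \<Rightarrow> real) \<Rightarrow> ('a \<Rightarrow> nat \<Rightarrow> real)
   \<Rightarrow> (nat \<Rightarrow> real) \<Rightarrow> real \<Rightarrow> bool" where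
  "regular_cut n q At bt r T D d0 \<alpha> \<beta> \<longleftrightarrow>
     (\<exists>c::real. \<exists>\<alpha>' \<beta>' u v. c > 0 \<and> cglp_regular_bfs n q At bt r T D d0 \<alpha>' \<beta>' u v \<and>
        (\<forall>j<n. \<alpha> j = c * \<alpha>' j) \<and> \<beta> = c * \<beta>')"

definition regular_closure ::
  "nat \<Rightarrow> nat \<Rightarrow> (nat \<Rightarrow> nat \<Rightarrow> real) \<Rightarrow> (nat \<Rightarrow> real) \<Rightarrow> nat \<Rightarrow> 'a set
   \<Rightarrow> ('a \<Rightarrow> nat \<Rightarrow> nat \<Rightarrow> real) \<Rightarrow> ('a \<Rightarrow> nat \<Rightarrow> real) \<Rightarrow> (nat \<Rightarrow> real) set" where
  "regular_closure n q At bt r T D d0 =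
     {x. (\<forall>i<q. bt i \<le> (\<Sum>j<n. At i j * x j)) \<and>
         (\<forall>\<alpha> \<beta>. regular_cut n q At bt r T D d0 \<alpha> \<beta> \<longrightarrow> \<beta> \<le> (\<Sum>j<n. \<alpha> j * x j))}"

end

theory Submission imports Defs Complex_Main "HOL-Library.Function_Algebras" begin

definition sc :: "real \<Rightarrow> (nat \<Rightarrow> real) \<Rightarrow> (nat \<Rightarrow> real)" where "sc c f = (\<lambda>j. c * f j)"

interpretation fv: vector_space sc
  by unfold_locales (auto simp: sc_def fun_eq_iff algebra_simps)

lemma sum_fun_apply: "(sum f A) (j::nat) = (\<Sum>x\<in>A. f x j)" for f :: "'b \<Rightarrow> nat \<Rightarrow> real"
  by (induction A rule: infinite_finite_induct) auto

definition rowv :: "nat \<Rightarrow> (nat\<Rightarrow>nat\<Rightarrow>real) \<Rightarrow> nat \<Rightarrow> nat \<Rightarrow> real" where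
  "rowv n At i = (\<lambda>k. if k < n then At i k else 0)"

definition ev :: "nat \<Rightarrow> nat \<Rightarrow> real" where "ev j = (\<lambda>k. if k = j then 1 else 0)"

lemma frr_imp:
  assumes "finite J" "full_row_rank n At J"
  shows "inj_on (rowv n At) J \<and> fv.independent (rowv n At ` J)"
proof
  show inj: "inj_on (rowv n At) J"
  proof (rule inj_onI, rule ccontr)
    fix i1 i2 assume h: "i1 \<in> J" "i2 \<in> J" "rowv n At i1 = rowv n At i2" "i1 \<noteq> i2"
    define c where "c = (\<lambda>i. if i = i1 then 1 else if i = i2 then -1 else (0::real))"
    have "\<forall>j<n. (\<Sum>i\<in>J. c i * At i j) = 0"
    proof (intro allI impI)
      fix j assume "j < n"
      have e: "At i1 j = At i2 j" using h(3) \<open>j<n\<close> unfolding rowv_def by (metis)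
      have "(\<Sum>i\<in>J. c i * At i j) = (\<Sum>i\<in>J. (if i = i1 then At i1 j else 0) + (if i = i2 then - At i2 j else 0))"
        by (rule sum.cong) (auto simp: c_def h(4))
      also have "\<dots> = At i1 j - At i2 j" using h assms(1) by (simp add: sum.distrib)
      finally show "(\<Sum>i\<in>J. c i * At i j) = 0" using e by simp
    qed
    then have "\<forall>i\<in>J. c i = 0" using spec[OF assms(2)[unfolded full_row_rank_def], of c] by simp
    then have "c i1 = 0" using h(1) by blast
    then show False by (simp add: c_def)
  qed
  show "fv.independent (rowv n At ` J)"
  proof
    assume "fv.dependent (rowv n At ` J)"
    then obtain u where u: "\<exists>v\<in>rowv n At ` J. u v \<noteq> 0" "(\<Sum>v\<in>rowv n At ` J. sc (u v) v) = 0"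
      using fv.dependent_finite assms(1) by blast
    have s: "(\<Sum>i\<in>J. sc (u (rowv n At i)) (rowv n At i)) = 0"
      using u(2) sum.reindex[OF inj, of "\<lambda>v. sc (u v) v"] by simp
    have "\<forall>j<n. (\<Sum>i\<in>J. u (rowv n At i) * At i j) = 0"
    proof (intro allI impI)
      fix j assume "j < n"
      have "(\<Sum>i\<in>J. sc (u (rowv n At i)) (rowv n At i)) j = 0" using s by simp
      then show "(\<Sum>i\<in>J. u (rowv n At i) * At i j) = 0"
        using \<open>j<n\<close> by (simp add: sum_fun_apply sc_def rowv_def)
    qed
    then have "\<forall>i\<in>J. u (rowv n At i) = 0" using spec[OF assms(2)[unfolded full_row_rank_def], of "\<lambda>i. u (rowv n At i)"] by simp
    with u(1) show False by auto
  qed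
qed

lemma frr_intro:
  assumes "finite J" "inj_on (rowv n At) J" "fv.independent (rowv n At ` J)"
  shows "full_row_rank n At J"
  unfolding full_row_rank_def
proof (intro allI impI ballI, rule ccontr)
  fix c i0 assume c: "\<forall>j<n. (\<Sum>i\<in>J. c i * At i j) = 0" and i0: "i0 \<in> J" "c i0 \<noteq> 0"
  define u where "u = (\<lambda>v. c (the_inv_into J (rowv n At) v))"
  have "(\<Sum>v\<in>rowv n At ` J. sc (u v) v) = (\<Sum>i\<in>J. sc (u (rowv n At i)) (rowv n At i))"
    using sum.reindex[OF assms(2), of "\<lambda>v. sc (u v) v"] by simp
  also have "\<dots> = (\<Sum>i\<in>J. sc (c i) (rowv n At i))"
    by (rule sum.cong) (auto simp: u_def the_inv_into_f_f[OF assms(2)])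
  also have "\<dots> = 0"
  proof
    fix k
    show "(\<Sum>i\<in>J. sc (c i) (rowv n At i)) k = 0 k"
      using c by (cases "k < n") (simp_all add: sum_fun_apply sc_def rowv_def)
  qed
  finally have z: "(\<Sum>v\<in>rowv n At ` J. sc (u v) v) = 0" .
  have "u (rowv n At i0) \<noteq> 0" using i0 by (simp add: u_def the_inv_into_f_f[OF assms(2)])
  then have "\<exists>v\<in>rowv n At ` J. u v \<noteq> 0" using i0 by blast
  then have "fv.dependent (rowv n At ` J)"
    using fv.dependent_finite[of "rowv n At ` J"] assms(1) z by blast
  with assms(3) show False by simp
qed

lemma mult_ind: "(a::real) * (if P then 1 else 0) = (if P then a else 0)" by simp

lemma ind_mult: "(if P then 1 else 0) * (a::real) = (if P then a else 0)" by simp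

lemma span_ev:
  assumes "\<forall>k\<ge>n. y k = 0"
  shows "y \<in> fv.span (ev ` {..<n})"
proof -
  have "y = (\<Sum>k<n. sc (y k) (ev k))"
  proof
    fix x show "y x = (\<Sum>k<n. sc (y k) (ev k)) x"
      using assms by (cases "x < n") (auto simp: sum_fun_apply sc_def ev_def mult_ind)
  qed
  also have "\<dots> \<in> fv.span (ev ` {..<n})"
    by (intro fv.span_sum fv.span_scale fv.span_base) auto
  finally show ?thesis .
qed

lemma ev_inj: "inj ev"
proof (rule injI)
  fix i j assume "ev i = ev j"
  then have "ev i i = ev j i" by simp
  then show "i = j" by (simp add: ev_def split: if_splits)
qed

lemma ev_indep: "fv.independent (ev ` {..<n})"
proof
  assume "fv.dependent (ev ` {..<n})"
  then obtain u where u: "\<exists>v\<in>ev ` {..<n}. u v \<noteq> 0" "(\<Sum>v\<in>ev ` {..<n}. sc (u v) v) = 0"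
    using fv.dependent_finite by blast
  have inj: "inj_on ev {..<n}" using ev_inj by (simp add: inj_on_def inj_def)
  have s: "(\<Sum>k<n. sc (u (ev k)) (ev k)) = 0"
    using u(2) sum.reindex[OF inj, of "\<lambda>v. sc (u v) v"] by simp
  obtain j where j: "j < n" "u (ev j) \<noteq> 0" using u(1) by blast
  have "(\<Sum>k<n. sc (u (ev k)) (ev k)) j = 0" using s by simp
  moreover have "\<And>k. ev k j = (if j = k then 1 else 0)" by (auto simp: ev_def)
  ultimately have "u (ev j) = 0" using j by (simp add: sum_fun_apply sc_def mult_ind)
  with j show False by simp
qed

lemma extend_rows:
  assumes unit: "\<forall>j<n. \<exists>i<q. \<forall>k<n. At i k = (if k = j then 1 else 0)"
    and N: "N \<subseteq> {..<q}" "full_row_rank n At N"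
  shows "\<exists>J. N \<subseteq> J \<and> J \<subseteq> {..<q} \<and> card J = n \<and> rows_nonsingular n At J"
proof -
  define F where "F = {J. N \<subseteq> J \<and> J \<subseteq> {..<q} \<and> full_row_rank n At J}"
  have fF: "finite F" unfolding F_def by (rule finite_subset[of _ "Pow {..<q}"]) auto
  have "N \<in> F" using N by (auto simp: F_def)
  define k where "k = Max (card ` F)"
  have "k \<in> card ` F" unfolding k_def using fF \<open>N\<in>F\<close> by (intro Max_in) auto
  then obtain J where J: "J \<in> F" "card J = k" by auto
  have maxJ: "\<And>J'. J' \<in> F \<Longrightarrow> card J' \<le> card J" using J(2) fF k_def by (auto intro: Max_ge)
  have fJ: "finite J" using J(1) by (auto simp: F_def intro: finite_subset)
  note ii = frr_imp[OF fJ, of n At]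
  have injJ: "inj_on (rowv n At) J" and indJ: "fv.independent (rowv n At ` J)" using ii J(1) F_def by auto
  have spanall: "rowv n At i \<in> fv.span (rowv n At ` J)" if "i < q" for i
  proof (rule ccontr)
    assume ns: "rowv n At i \<notin> fv.span (rowv n At ` J)"
    have nim: "rowv n At i \<notin> rowv n At ` J" using ns fv.span_base by blast
    then have iJ: "i \<notin> J" by blast
    have "inj_on (rowv n At) (insert i J)" using injJ nim by auto
    moreover have "fv.independent (rowv n At ` insert i J)" using fv.independent_insertI[OF ns indJ] by simp
    ultimately have "full_row_rank n At (insert i J)" using frr_intro fJ by blast
    then have "insert i J \<in> F" using J(1) that by (auto simp: F_def)
    then have "card (insert i J) \<le> card J" by (rule maxJ)
    with fJ iJ show False by simp
  qed
  have evrow: "\<exists>i<q. rowv n At i = ev j" if jn: "j < n" for j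
  proof -
    obtain i where i: "i < q" "\<forall>k<n. At i k = (if k = j then 1 else 0)"
      using unit[rule_format, OF jn] by blast
    then have e: "rowv n At i = ev j" using jn by (auto simp: rowv_def ev_def fun_eq_iff)
    with i(1) show ?thesis by blast
  qed
  have Esub: "ev ` {..<n} \<subseteq> fv.span (rowv n At ` J)"
  proof
    fix e assume "e \<in> ev ` {..<n}"
    then obtain j where j: "j < n" "e = ev j" by blast
    obtain i where i: "i < q" "rowv n At i = ev j" using evrow[OF j(1)] by blast
    show "e \<in> fv.span (rowv n At ` J)" using spanall[OF i(1)] i(2) j(2) by simp
  qed
  have Rsub: "rowv n At ` J \<subseteq> fv.span (ev ` {..<n})"
  proof
    fix e assume "e \<in> rowv n At ` J"
    then obtain i where i: "e = rowv n At i" by blast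
    have "\<forall>k\<ge>n. rowv n At i k = 0" by (simp add: rowv_def)
    then show "e \<in> fv.span (ev ` {..<n})" using span_ev i by blast
  qed
  have fE: "finite (ev ` {..<n})" by simp
  have c1: "card (rowv n At ` J) \<le> card (ev ` {..<n})"
    using fv.independent_span_bound[OF fE indJ Rsub] by (rule conjunct2)
  have fR: "finite (rowv n At ` J)" using fJ by (rule finite_imageI)
  have c2: "card (ev ` {..<n}) \<le> card (rowv n At ` J)"
    using fv.independent_span_bound[OF fR ev_indep Esub] by (rule conjunct2)
  have cE: "card (ev ` {..<n}) = n"
    using card_image[OF inj_on_subset[OF ev_inj subset_UNIV, of "{..<n}"]] by simp
  have cR: "card (rowv n At ` J) = card J" by (rule card_image[OF injJ])
  have cJ: "card J = n" using c1 c2 cE cR by linarith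
  have "rows_nonsingular n At J"
    unfolding rows_nonsingular_def
  proof (intro conjI allI impI cJ)
    fix x j assume x: "\<forall>i\<in>J. (\<Sum>j<n. At i j * x j) = 0" and j: "j < n"
    define S where "S = {y::nat\<Rightarrow>real. (\<Sum>k<n. y k * x k) = 0}"
    have "fv.subspace S"
    proof (rule fv.subspaceI)
      show "0 \<in> S" by (simp add: S_def)
    next
      fix y z assume "y \<in> S" "z \<in> S"
      then show "y + z \<in> S" by (simp add: S_def distrib_right sum.distrib)
    next
      fix c y assume "y \<in> S"
      then show "sc c y \<in> S" by (simp add: S_def sc_def sum_distrib_left[symmetric] mult.assoc)
    qed
    moreover have "rowv n At ` J \<subseteq> S" using x by (auto simp: S_def rowv_def)
    ultimately have "fv.span (rowv n At ` J) \<subseteq> S" by (intro fv.span_minimal)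
    with Esub j have "ev j \<in> S" by blast
    then show "x j = 0" using j by (simp add: S_def ev_def ind_mult)
  qed
  then show ?thesis using J(1) cJ by (auto simp: F_def)
qed


lemma frr_mono:
  assumes "finite Nb" "N \<subseteq> Nb" "full_row_rank n At Nb"
  shows "full_row_rank n At N"
  unfolding full_row_rank_def
proof (intro allI impI)
  fix c assume c: "\<forall>j<n. (\<Sum>i\<in>N. c i * At i j) = 0"
  define c' where "c' = (\<lambda>i. if i \<in> N then c i else 0)"
  have "\<forall>j<n. (\<Sum>i\<in>Nb. c' i * At i j) = 0"
  proof (intro allI impI)
    fix j assume j: "j < n"
    have "(\<Sum>i\<in>Nb. c' i * At i j) = (\<Sum>i\<in>N. c' i * At i j)"
      using assms(1,2) by (intro sum.mono_neutral_right) (auto simp: c'_def)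
    also have "\<dots> = (\<Sum>i\<in>N. c i * At i j)" by (rule sum.cong) (auto simp: c'_def)
    finally show "(\<Sum>i\<in>Nb. c' i * At i j) = 0" using c j by simp
  qed
  then have "\<forall>i\<in>Nb. c' i = 0" using spec[OF assms(3)[unfolded full_row_rank_def], of c'] by simp
  then show "\<forall>i\<in>N. c i = 0"
  proof (intro ballI)
    fix i assume h: "\<forall>i\<in>Nb. c' i = 0" and i: "i \<in> N"
    then have "c' i = 0" using assms(2) by blast
    then show "c i = 0" using i by (simp add: c'_def)
  qed
qed

definition M :: "'a set \<Rightarrow> nat \<Rightarrow> nat \<Rightarrow> ('a\<Rightarrow>nat\<Rightarrow>real) \<Rightarrow> ('a\<Rightarrow>nat\<Rightarrow>real) \<Rightarrow> nat" where
  "M T q r u v = card {(t,i). t\<in>T \<and> i<q \<and> u t i \<noteq> 0} + card {(t,i). t\<in>T \<and> i<r \<and> v t i \<noteq> 0}"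

lemma fin_supp: assumes "finite T" shows "finite {(t,i). t\<in>T \<and> i<(q::nat) \<and> P t i}"
proof (rule finite_subset)
  show "{(t,i). t\<in>T \<and> i<q \<and> P t i} \<subseteq> T \<times> {..<q}" by auto
  show "finite (T \<times> {..<q})" by (rule finite_cartesian_product[OF assms finite_lessThan])
qed

lemma supp_sub:
  fixes q :: nat
  assumes "\<forall>t\<in>T. \<forall>i<q. u t i = 0 \<longrightarrow> du t i = 0"
  shows "{(t,i). t\<in>T \<and> i<q \<and> u t i + s * du t i \<noteq> 0} \<subseteq> {(t,i). t\<in>T \<and> i<q \<and> u t i \<noteq> (0::real)}"
  using assms by auto

lemma supp_psub:
  fixes q :: nat
  assumes "\<forall>t\<in>T. \<forall>i<q. u t i = 0 \<longrightarrow> du t i = 0"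
    and "\<exists>t\<in>T. \<exists>i<q. u t i \<noteq> 0 \<and> u t i + s * du t i = 0"
  shows "{(t,i). t\<in>T \<and> i<q \<and> u t i + s * du t i \<noteq> 0} \<subset> {(t,i). t\<in>T \<and> i<q \<and> u t i \<noteq> (0::real)}"
proof -
  obtain t i where "t\<in>T" "i<q" "u t i \<noteq> 0" "u t i + s * du t i = 0" using assms(2) by blast
  then have "(t,i) \<in> {(t,i). t\<in>T \<and> i<q \<and> u t i \<noteq> (0::real)}"
    "(t,i) \<notin> {(t,i). t\<in>T \<and> i<q \<and> u t i + s * du t i \<noteq> 0}" by auto
  with supp_sub[OF assms(1)] show ?thesis by blast
qed

lemma M_decrease:
  assumes fin: "finite T"
    and z: "\<forall>t\<in>T. \<forall>i<q. u t i = 0 \<longrightarrow> du t i = 0" "\<forall>t\<in>T. \<forall>i<r. v t i = 0 \<longrightarrow> dv t i = 0"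
    and w: "(\<exists>t\<in>T. \<exists>i<q. u t i \<noteq> 0 \<and> u t i + s * du t i = 0) \<or> (\<exists>t\<in>T. \<exists>i<r. v t i \<noteq> 0 \<and> v t i + s * dv t i = 0)"
  shows "M T q r (\<lambda>t i. u t i + s * du t i) (\<lambda>t i. v t i + s * dv t i) < M T q r u v"
proof -
  note cm = card_mono[OF fin_supp[OF fin]]
  note pm = psubset_card_mono[OF fin_supp[OF fin]]
  from w show ?thesis
  proof
    assume h: "\<exists>t\<in>T. \<exists>i<q. u t i \<noteq> 0 \<and> u t i + s * du t i = 0"
    have "card {(t,i). t\<in>T \<and> i<q \<and> u t i + s * du t i \<noteq> 0} < card {(t,i). t\<in>T \<and> i<q \<and> u t i \<noteq> 0}"
      by (rule pm[OF supp_psub[OF z(1) h]])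
    moreover have "card {(t,i). t\<in>T \<and> i<r \<and> v t i + s * dv t i \<noteq> 0} \<le> card {(t,i). t\<in>T \<and> i<r \<and> v t i \<noteq> 0}"
      by (rule cm[OF supp_sub[OF z(2)]])
    ultimately show ?thesis by (simp add: M_def)
  next
    assume h: "\<exists>t\<in>T. \<exists>i<r. v t i \<noteq> 0 \<and> v t i + s * dv t i = 0"
    have "card {(t,i). t\<in>T \<and> i<r \<and> v t i + s * dv t i \<noteq> 0} < card {(t,i). t\<in>T \<and> i<r \<and> v t i \<noteq> 0}"
      by (rule pm[OF supp_psub[OF z(2) h]])
    moreover have "card {(t,i). t\<in>T \<and> i<q \<and> u t i + s * du t i \<noteq> 0} \<le> card {(t,i). t\<in>T \<and> i<q \<and> u t i \<noteq> 0}"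
      by (rule cm[OF supp_sub[OF z(1)]])
    ultimately show ?thesis by (simp add: M_def)
  qed
qed

lemma exists_neg:
  fixes q r :: nat
  assumes fin: "finite T" and s: "(\<Sum>t\<in>T. \<Sum>i<q. du t i) + (\<Sum>t\<in>T. \<Sum>i<r. dv t i) = (0::real)"
    and nz: "\<exists>t\<in>T. (\<exists>i<q. du t i \<noteq> 0) \<or> (\<exists>i<r. dv t i \<noteq> 0)"
  shows "\<exists>t\<in>T. (\<exists>i<q. du t i < 0) \<or> (\<exists>i<r. dv t i < 0)"
proof (rule ccontr)
  assume "\<not> ?thesis"
  then have p1: "\<forall>t\<in>T. \<forall>i<q. 0 \<le> du t i" and p2: "\<forall>t\<in>T. \<forall>i<r. 0 \<le> dv t i" by force+
  have a: "0 \<le> (\<Sum>t\<in>T. \<Sum>i<q. du t i)" using p1 by (intro sum_nonneg) auto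
  have b: "0 \<le> (\<Sum>t\<in>T. \<Sum>i<r. dv t i)" using p2 by (intro sum_nonneg) auto
  have a0: "(\<Sum>t\<in>T. \<Sum>i<q. du t i) = 0" and b0: "(\<Sum>t\<in>T. \<Sum>i<r. dv t i) = 0" using a b s by linarith+
  obtain t where t: "t \<in> T" "(\<exists>i<q. du t i \<noteq> 0) \<or> (\<exists>i<r. dv t i \<noteq> 0)" using nz by blast
  have "\<And>x. x \<in> T \<Longrightarrow> 0 \<le> (\<Sum>i<q. du x i)" using p1 by (auto intro!: sum_nonneg)
  from sum_nonneg_eq_0_iff[OF fin this] a0 have "\<forall>x\<in>T. (\<Sum>i<q. du x i) = 0" by simp
  then have "(\<Sum>i<q. du t i) = 0" using t(1) by blast
  moreover have "\<And>i. i \<in> {..<q} \<Longrightarrow> 0 \<le> du t i" using p1 t(1) by simp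
  ultimately have u0: "\<forall>i<q. du t i = 0" using sum_nonneg_eq_0_iff[OF finite_lessThan, of q "du t"] by simp
  have "\<And>x. x \<in> T \<Longrightarrow> 0 \<le> (\<Sum>i<r. dv x i)" using p2 by (auto intro!: sum_nonneg)
  from sum_nonneg_eq_0_iff[OF fin this] b0 have "\<forall>x\<in>T. (\<Sum>i<r. dv x i) = 0" by simp
  then have "(\<Sum>i<r. dv t i) = 0" using t(1) by blast
  moreover have "\<And>i. i \<in> {..<r} \<Longrightarrow> 0 \<le> dv t i" using p2 t(1) by simp
  ultimately have v0: "\<forall>i<r. dv t i = 0" using sum_nonneg_eq_0_iff[OF finite_lessThan, of r "dv t"] by simp
  from t(2) u0 v0 show False by blast
qed

lemma ratio_pos: "0 \<le> (a::real) \<Longrightarrow> a \<noteq> 0 \<Longrightarrow> b < 0 \<Longrightarrow> 0 < a / - b"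
  by (intro divide_pos_pos) auto

lemma ratio_le: "(l::real) \<le> a / - b \<Longrightarrow> b < 0 \<Longrightarrow> l * - b \<le> a"
  using pos_le_divide_eq[of "-b" l a] by simp

lemma step_ratio:
  fixes u v du dv :: "'a \<Rightarrow> nat \<Rightarrow> real" and q r :: nat
  assumes fin: "finite T"
   and pos: "\<forall>t\<in>T. \<forall>i<q. 0 \<le> u t i" "\<forall>t\<in>T. \<forall>i<r. 0 \<le> v t i"
   and z: "\<forall>t\<in>T. \<forall>i<q. u t i = 0 \<longrightarrow> du t i = 0" "\<forall>t\<in>T. \<forall>i<r. v t i = 0 \<longrightarrow> dv t i = 0"
   and neg: "\<exists>t\<in>T. (\<exists>i<q. du t i < 0) \<or> (\<exists>i<r. dv t i < 0)"
  shows "\<exists>l>0. (\<forall>t\<in>T. \<forall>i<q. 0 \<le> u t i + l * du t i) \<and> (\<forall>t\<in>T. \<forall>i<r. 0 \<le> v t i + l * dv t i) \<and>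
     ((\<exists>t\<in>T. \<exists>i<q. u t i \<noteq> 0 \<and> u t i + l * du t i = 0) \<or> (\<exists>t\<in>T. \<exists>i<r. v t i \<noteq> 0 \<and> v t i + l * dv t i = 0))"
proof -
  define RU where "RU = (\<lambda>(t,i). u t i / - du t i) ` {(t,i). t\<in>T \<and> i<q \<and> du t i < 0}"
  define RV where "RV = (\<lambda>(t,i). v t i / - dv t i) ` {(t,i). t\<in>T \<and> i<r \<and> dv t i < 0}"
  define R where "R = RU \<union> RV"
  have fR: "finite R" unfolding R_def RU_def RV_def
    by (intro finite_UnI finite_imageI fin_supp[OF fin])
  have neR: "R \<noteq> {}" using neg unfolding R_def RU_def RV_def by auto
  define l where "l = Min R"
  have lR: "l \<in> R" unfolding l_def using fR neR by (rule Min_in)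
  have lle: "\<And>y. y \<in> R \<Longrightarrow> l \<le> y" unfolding l_def using fR by (rule Min_le)
  have Rpos: "\<And>y. y \<in> R \<Longrightarrow> 0 < y"
  proof -
    fix y assume "y \<in> R"
    then show "0 < y" unfolding R_def RU_def RV_def
    proof (elim UnE imageE)
      fix ti assume "y = (\<lambda>(t,i). u t i / - du t i) ti" "ti \<in> {(t,i). t\<in>T \<and> i<q \<and> du t i < 0}"
      then obtain t i where "y = u t i / - du t i" "t \<in> T" "i < q" "du t i < 0" by auto
      moreover then have "u t i \<noteq> 0" using z(1) by force
      moreover have "0 \<le> u t i" using pos(1) calculation by blast
      ultimately show "0 < y" using ratio_pos by simp
    next
      fix ti assume "y = (\<lambda>(t,i). v t i / - dv t i) ti" "ti \<in> {(t,i). t\<in>T \<and> i<r \<and> dv t i < 0}"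
      then obtain t i where "y = v t i / - dv t i" "t \<in> T" "i < r" "dv t i < 0" by auto
      moreover then have "v t i \<noteq> 0" using z(2) by force
      moreover have "0 \<le> v t i" using pos(2) calculation by blast
      ultimately show "0 < y" using ratio_pos by simp
    qed
  qed
  have lpos: "0 < l" using Rpos lR by blast
  have c1: "\<forall>t\<in>T. \<forall>i<q. 0 \<le> u t i + l * du t i"
  proof (intro ballI allI impI)
    fix t i assume ti: "t \<in> T" "i < q"
    show "0 \<le> u t i + l * du t i"
    proof (cases "du t i < 0")
      case True
      then have "u t i / - du t i \<in> R" unfolding R_def RU_def using ti by force
      then have "l \<le> u t i / - du t i" by (rule lle)
      then have "l * - du t i \<le> u t i" using True by (rule ratio_le)
      then show ?thesis by simp
    next
      case False
      then show ?thesis using pos(1) ti lpos by (simp add: add_nonneg_nonneg)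
    qed
  qed
  have c2: "\<forall>t\<in>T. \<forall>i<r. 0 \<le> v t i + l * dv t i"
  proof (intro ballI allI impI)
    fix t i assume ti: "t \<in> T" "i < r"
    show "0 \<le> v t i + l * dv t i"
    proof (cases "dv t i < 0")
      case True
      then have "v t i / - dv t i \<in> R" unfolding R_def RV_def using ti by force
      then have "l \<le> v t i / - dv t i" by (rule lle)
      then have "l * - dv t i \<le> v t i" using True by (rule ratio_le)
      then show ?thesis by simp
    next
      case False
      then show ?thesis using pos(2) ti lpos by (simp add: add_nonneg_nonneg)
    qed
  qed
  have c3: "(\<exists>t\<in>T. \<exists>i<q. u t i \<noteq> 0 \<and> u t i + l * du t i = 0) \<or> (\<exists>t\<in>T. \<exists>i<r. v t i \<noteq> 0 \<and> v t i + l * dv t i = 0)"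
    using lR unfolding R_def
  proof (elim UnE)
    assume "l \<in> RU"
    then obtain t i where ti: "l = u t i / - du t i" "t \<in> T" "i < q" "du t i < 0" unfolding RU_def by auto
    then have "u t i + l * du t i = 0" by simp
    moreover have "u t i \<noteq> 0" using ti lpos by auto
    ultimately show ?thesis using ti by blast
  next
    assume "l \<in> RV"
    then obtain t i where ti: "l = v t i / - dv t i" "t \<in> T" "i < r" "dv t i < 0" unfolding RV_def by auto
    then have "v t i + l * dv t i = 0" by simp
    moreover have "v t i \<noteq> 0" using ti lpos by auto
    ultimately show ?thesis using ti by blast
  qed
  show ?thesis using lpos c1 c2 c3 by blast
qed


lemma sum_move: "(\<Sum>i\<in>I. (a i + s * b i) * (c i::real)) = (\<Sum>i\<in>I. a i * c i) + s * (\<Sum>i\<in>I. b i * c i)"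
  by (simp add: algebra_simps sum.distrib sum_distrib_left)

lemma sum_move2: "(\<Sum>i\<in>I. (a i::real) + s * b i) = (\<Sum>i\<in>I. a i) + s * (\<Sum>i\<in>I. b i)"
  by (simp add: sum.distrib sum_distrib_left)

lemma feas_move:
  assumes f: "cglp_feasible n q At bt r T D d0 \<alpha> \<beta> u v"
   and h1: "\<forall>j. n \<le> j \<longrightarrow> da j = 0" and h2: "\<forall>t i. t \<notin> T \<or> q \<le> i \<longrightarrow> du t i = 0"
   and h3: "\<forall>t i. t \<notin> T \<or> r \<le> i \<longrightarrow> dv t i = 0"
   and h4: "\<forall>t\<in>T. \<forall>j<n. da j - (\<Sum>i<q. du t i * At i j) - (\<Sum>i<r. dv t i * D t i j) = 0"
   and h5: "\<forall>t\<in>T. db - (\<Sum>i<q. du t i * bt i) - (\<Sum>i<r. dv t i * d0 t i) = 0"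
   and h6: "(\<Sum>t\<in>T. \<Sum>i<q. du t i) + (\<Sum>t\<in>T. \<Sum>i<r. dv t i) = 0"
   and p1: "\<forall>t\<in>T. \<forall>i<q. 0 \<le> u t i + s * du t i" and p2: "\<forall>t\<in>T. \<forall>i<r. 0 \<le> v t i + s * dv t i"
  shows "cglp_feasible n q At bt r T D d0 (\<lambda>j. \<alpha> j + s * da j) (\<beta> + s * db) (\<lambda>t i. u t i + s * du t i) (\<lambda>t i. v t i + s * dv t i)"
proof -
  from f have f1: "\<forall>j. n \<le> j \<longrightarrow> \<alpha> j = 0" and f2: "\<forall>t i. t \<notin> T \<or> q \<le> i \<longrightarrow> u t i = 0"
    and f3: "\<forall>t i. t \<notin> T \<or> r \<le> i \<longrightarrow> v t i = 0"
    and f4: "\<forall>t\<in>T. \<forall>j<n. \<alpha> j - (\<Sum>i<q. u t i * At i j) - (\<Sum>i<r. v t i * D t i j) = 0"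
    and f5: "\<forall>t\<in>T. \<beta> - (\<Sum>i<q. u t i * bt i) - (\<Sum>i<r. v t i * d0 t i) = 0"
    and f6: "(\<Sum>t\<in>T. \<Sum>i<q. u t i) + (\<Sum>t\<in>T. \<Sum>i<r. v t i) = 1"
    unfolding cglp_feasible_def by blast+
  have e4: "\<forall>t\<in>T. \<forall>j<n. (\<alpha> j + s * da j) - (\<Sum>i<q. (u t i + s * du t i) * At i j) - (\<Sum>i<r. (v t i + s * dv t i) * D t i j) = 0"
  proof (intro ballI allI impI)
    fix t j assume "t \<in> T" "j < n"
    then have "\<alpha> j - (\<Sum>i<q. u t i * At i j) - (\<Sum>i<r. v t i * D t i j) = 0"
      "da j - (\<Sum>i<q. du t i * At i j) - (\<Sum>i<r. dv t i * D t i j) = 0" using f4 h4 by blast+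
    then show "(\<alpha> j + s * da j) - (\<Sum>i<q. (u t i + s * du t i) * At i j) - (\<Sum>i<r. (v t i + s * dv t i) * D t i j) = 0"
      unfolding sum_move by (simp add: algebra_simps)
  qed
  have e5: "\<forall>t\<in>T. (\<beta> + s * db) - (\<Sum>i<q. (u t i + s * du t i) * bt i) - (\<Sum>i<r. (v t i + s * dv t i) * d0 t i) = 0"
  proof (intro ballI)
    fix t assume "t \<in> T"
    then have "\<beta> - (\<Sum>i<q. u t i * bt i) - (\<Sum>i<r. v t i * d0 t i) = 0"
      "db - (\<Sum>i<q. du t i * bt i) - (\<Sum>i<r. dv t i * d0 t i) = 0" using f5 h5 by blast+
    then show "(\<beta> + s * db) - (\<Sum>i<q. (u t i + s * du t i) * bt i) - (\<Sum>i<r. (v t i + s * dv t i) * d0 t i) = 0"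
      unfolding sum_move by (simp add: algebra_simps)
  qed
  have e6: "(\<Sum>t\<in>T. \<Sum>i<q. u t i + s * du t i) + (\<Sum>t\<in>T. \<Sum>i<r. v t i + s * dv t i) = 1"
  proof -
    have "s * (\<Sum>t\<in>T. \<Sum>i<q. du t i) + s * (\<Sum>t\<in>T. \<Sum>i<r. dv t i) = 0"
      using h6 by (metis distrib_left mult_zero_right)
    then show ?thesis unfolding sum_move2 using f6 by linarith
  qed
  show ?thesis unfolding cglp_feasible_def
    using f1 f2 f3 h1 h2 h3 e4 e5 e6 p1 p2 by simp
qed

lemma main:
  assumes fin: "finite T"
    and unit: "\<forall>j<n. \<exists>i<q. \<forall>k<n. At i k = (if k = j then 1 else 0)"
    and Nb: "Nb \<subseteq> {..<q}" "full_row_rank n At Nb"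
    and x: "\<forall>\<alpha> \<beta>. regular_cut n q At bt r T D d0 \<alpha> \<beta> \<longrightarrow> \<beta> \<le> (\<Sum>j<n. \<alpha> j * x j)"
  shows "cglp_feasible n q At bt r T D d0 \<alpha> \<beta> u v \<Longrightarrow> {j. j<q \<and> (\<exists>t\<in>T. u t j > 0)} \<subseteq> Nb
     \<Longrightarrow> \<beta> \<le> (\<Sum>j<n. \<alpha> j * x j)"
proof (induction "M T q r u v" arbitrary: \<alpha> \<beta> u v rule: less_induct)
  case less
  note feas = less.prems(1)
  have upos: "\<forall>t\<in>T. \<forall>i<q. 0 \<le> u t i" and vpos: "\<forall>t\<in>T. \<forall>i<r. 0 \<le> v t i"
    and norm: "(\<Sum>t\<in>T. \<Sum>i<q. u t i) + (\<Sum>t\<in>T. \<Sum>i<r. v t i) = 1"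
    using feas unfolding cglp_feasible_def by blast+
  show ?case
  proof (cases "cglp_basic n q At bt r T D d0 \<alpha> \<beta> u v")
    case True
    define N where "N = {j. j<q \<and> (\<exists>t\<in>T. u t j > 0)}"
    have fNb: "finite Nb" using Nb(1) by (rule finite_subset) simp
    have "full_row_rank n At N" using frr_mono[OF fNb _ Nb(2)] less.prems(2) N_def by blast
    moreover have "N \<subseteq> {..<q}" by (auto simp: N_def)
    ultimately obtain J where J: "N \<subseteq> J" "J \<subseteq> {..<q}" "card J = n" "rows_nonsingular n At J"
      using extend_rows[OF unit] by blast
    have "\<forall>t\<in>T. \<forall>j<q. j \<notin> J \<longrightarrow> u t j = 0"
    proof (intro ballI allI impI)
      fix t j assume tj: "t \<in> T" "j < q" "j \<notin> J"
      then have "\<not> u t j > 0" using J(1) N_def by blast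
      moreover have "0 \<le> u t j" using upos tj by blast
      ultimately show "u t j = 0" by simp
    qed
    then have rb: "cglp_regular_bfs n q At bt r T D d0 \<alpha> \<beta> u v"
      unfolding cglp_regular_bfs_def using True J by blast
    have "regular_cut n q At bt r T D d0 \<alpha> \<beta>"
      unfolding regular_cut_def
      apply (rule exI[of _ "1::real"], rule exI[of _ \<alpha>], rule exI[of _ \<beta>], rule exI[of _ u], rule exI[of _ v])
      using rb by simp
    then show ?thesis using x by blast
  next
    case False
    have X: "\<not> (\<forall>da db du dv. (\<forall>j. n \<le> j \<longrightarrow> da j = 0) \<and>
        (\<forall>t i. t \<notin> T \<or> q \<le> i \<longrightarrow> du t i = 0) \<and>
        (\<forall>t i. t \<notin> T \<or> r \<le> i \<longrightarrow> dv t i = 0) \<and>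
        (\<forall>t\<in>T. \<forall>j<n. da j - (\<Sum>i<q. du t i * At i j) - (\<Sum>i<r. dv t i * D t i j) = 0) \<and>
        (\<forall>t\<in>T. db - (\<Sum>i<q. du t i * bt i) - (\<Sum>i<r. dv t i * d0 t i) = 0) \<and>
        (\<Sum>t\<in>T. \<Sum>i<q. du t i) + (\<Sum>t\<in>T. \<Sum>i<r. dv t i) = 0 \<and>
        (\<forall>t\<in>T. \<forall>i<q. u t i = 0 \<longrightarrow> du t i = 0) \<and>
        (\<forall>t\<in>T. \<forall>i<r. v t i = 0 \<longrightarrow> dv t i = 0)
      \<longrightarrow> ((\<forall>j. da j = 0) \<and> db = 0 \<and> (\<forall>t i. du t i = 0) \<and> (\<forall>t i. dv t i = 0)))"
      using False unfolding cglp_basic_def by (simp only: feas simp_thms)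
    then obtain da db du dv where Y: "\<not> ((\<forall>j. n \<le> j \<longrightarrow> da j = 0) \<and>
        (\<forall>t i. t \<notin> T \<or> q \<le> i \<longrightarrow> du t i = 0) \<and>
        (\<forall>t i. t \<notin> T \<or> r \<le> i \<longrightarrow> dv t i = 0) \<and>
        (\<forall>t\<in>T. \<forall>j<n. da j - (\<Sum>i<q. du t i * At i j) - (\<Sum>i<r. dv t i * D t i j) = 0) \<and>
        (\<forall>t\<in>T. db - (\<Sum>i<q. du t i * bt i) - (\<Sum>i<r. dv t i * d0 t i) = 0) \<and>
        (\<Sum>t\<in>T. \<Sum>i<q. du t i) + (\<Sum>t\<in>T. \<Sum>i<r. dv t i) = 0 \<and>
        (\<forall>t\<in>T. \<forall>i<q. u t i = 0 \<longrightarrow> du t i = 0) \<and>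
        (\<forall>t\<in>T. \<forall>i<r. v t i = 0 \<longrightarrow> dv t i = 0)
      \<longrightarrow> ((\<forall>j. da j = 0) \<and> db = 0 \<and> (\<forall>t i. du t i = 0) \<and> (\<forall>t i. dv t i = 0)))"
      by (simp only: not_all) (elim exE)
    have Z: "(\<forall>j. n \<le> j \<longrightarrow> da j = 0) \<and>
        (\<forall>t i. t \<notin> T \<or> q \<le> i \<longrightarrow> du t i = 0) \<and>
        (\<forall>t i. t \<notin> T \<or> r \<le> i \<longrightarrow> dv t i = 0) \<and>
        (\<forall>t\<in>T. \<forall>j<n. da j - (\<Sum>i<q. du t i * At i j) - (\<Sum>i<r. dv t i * D t i j) = 0) \<and>
        (\<forall>t\<in>T. db - (\<Sum>i<q. du t i * bt i) - (\<Sum>i<r. dv t i * d0 t i) = 0) \<and>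
        (\<Sum>t\<in>T. \<Sum>i<q. du t i) + (\<Sum>t\<in>T. \<Sum>i<r. dv t i) = 0 \<and>
        (\<forall>t\<in>T. \<forall>i<q. u t i = 0 \<longrightarrow> du t i = 0) \<and>
        (\<forall>t\<in>T. \<forall>i<r. v t i = 0 \<longrightarrow> dv t i = 0)" and nt: "\<not> ((\<forall>j. da j = 0) \<and> db = 0 \<and> (\<forall>t i. du t i = 0) \<and> (\<forall>t i. dv t i = 0))"
      using Y[unfolded not_imp] by (rule conjunct1, rule conjunct2)
    note h1 = Z[THEN conjunct1]
    note h2 = Z[THEN conjunct2, THEN conjunct1]
    note h3 = Z[THEN conjunct2, THEN conjunct2, THEN conjunct1]
    note h4 = Z[THEN conjunct2, THEN conjunct2, THEN conjunct2, THEN conjunct1]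
    note h5 = Z[THEN conjunct2, THEN conjunct2, THEN conjunct2, THEN conjunct2, THEN conjunct1]
    note h6 = Z[THEN conjunct2, THEN conjunct2, THEN conjunct2, THEN conjunct2, THEN conjunct2, THEN conjunct1]
    note z1 = Z[THEN conjunct2, THEN conjunct2, THEN conjunct2, THEN conjunct2, THEN conjunct2, THEN conjunct2, THEN conjunct1]
    note z2 = Z[THEN conjunct2, THEN conjunct2, THEN conjunct2, THEN conjunct2, THEN conjunct2, THEN conjunct2, THEN conjunct2]
    have Tne: "T \<noteq> {}" using norm by auto
    then obtain t0 where t0: "t0 \<in> T" by blast
    have nz: "\<exists>t\<in>T. (\<exists>i<q. du t i \<noteq> 0) \<or> (\<exists>i<r. dv t i \<noteq> 0)"
    proof (rule ccontr)
      assume "\<not> ?thesis"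
      then have du0: "\<forall>t i. du t i = 0" and dv0: "\<forall>t i. dv t i = 0" using h2 h3
        by (metis not_le)+
      have "\<forall>j. da j = 0"
      proof
        fix j show "da j = 0"
        proof (cases "j < n")
          case True
          then have "da j - (\<Sum>i<q. du t0 i * At i j) - (\<Sum>i<r. dv t0 i * D t0 i j) = 0"
            using h4 t0 by blast
          then show ?thesis using du0 dv0 by simp
        next
          case False then show ?thesis using h1 by simp
        qed
      qed
      moreover have "db - (\<Sum>i<q. du t0 i * bt i) - (\<Sum>i<r. dv t0 i * d0 t0 i) = 0"
        using h5 t0 by blast
      then have "db = 0" using du0 dv0 by simp
      ultimately show False using nt du0 dv0 by blast
    qed
    have neg: "\<exists>t\<in>T. (\<exists>i<q. du t i < 0) \<or> (\<exists>i<r. dv t i < 0)"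
      by (rule exists_neg[OF fin h6 nz])
    have h6': "(\<Sum>t\<in>T. \<Sum>i<q. - du t i) + (\<Sum>t\<in>T. \<Sum>i<r. - dv t i) = 0"
      using h6 by (simp add: sum_negf)
    have negm: "\<exists>t\<in>T. (\<exists>i<q. - du t i < 0) \<or> (\<exists>i<r. - dv t i < 0)"
      by (rule exists_neg[OF fin h6']) (use nz in auto)
    obtain l where l: "l > 0" "\<forall>t\<in>T. \<forall>i<q. 0 \<le> u t i + l * du t i" "\<forall>t\<in>T. \<forall>i<r. 0 \<le> v t i + l * dv t i"
      "(\<exists>t\<in>T. \<exists>i<q. u t i \<noteq> 0 \<and> u t i + l * du t i = 0) \<or> (\<exists>t\<in>T. \<exists>i<r. v t i \<noteq> 0 \<and> v t i + l * dv t i = 0)"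
      using step_ratio[OF fin upos vpos z1 z2 neg] by blast
    have z1': "\<forall>t\<in>T. \<forall>i<q. u t i = 0 \<longrightarrow> - du t i = 0" using z1 by simp
    have z2': "\<forall>t\<in>T. \<forall>i<r. v t i = 0 \<longrightarrow> - dv t i = 0" using z2 by simp
    obtain mu where mu0: "mu > 0" "\<forall>t\<in>T. \<forall>i<q. 0 \<le> u t i + mu * - du t i" "\<forall>t\<in>T. \<forall>i<r. 0 \<le> v t i + mu * - dv t i"
      "(\<exists>t\<in>T. \<exists>i<q. u t i \<noteq> 0 \<and> u t i + mu * - du t i = 0) \<or> (\<exists>t\<in>T. \<exists>i<r. v t i \<noteq> 0 \<and> v t i + mu * - dv t i = 0)"
      using step_ratio[OF fin upos vpos z1' z2' negm] by blast
    have mu: "\<forall>t\<in>T. \<forall>i<q. 0 \<le> u t i + (-mu) * du t i" "\<forall>t\<in>T. \<forall>i<r. 0 \<le> v t i + (-mu) * dv t i"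
      "(\<exists>t\<in>T. \<exists>i<q. u t i \<noteq> 0 \<and> u t i + (-mu) * du t i = 0) \<or> (\<exists>t\<in>T. \<exists>i<r. v t i \<noteq> 0 \<and> v t i + (-mu) * dv t i = 0)"
      using mu0(2,3,4) by simp_all
    have supp: "{j. j<q \<and> (\<exists>t\<in>T. u t j + s * du t j > 0)} \<subseteq> Nb" for s
    proof
      fix j assume "j \<in> {j. j<q \<and> (\<exists>t\<in>T. u t j + s * du t j > 0)}"
      then obtain t where tj: "j < q" "t \<in> T" "u t j + s * du t j > 0" by blast
      have "u t j \<noteq> 0" using tj z1 by force
      moreover have "0 \<le> u t j" using upos tj by blast
      ultimately have "u t j > 0" by simp
      then show "j \<in> Nb" using less.prems(2) tj by blast
    qed
    have IH1: "\<beta> + l * db \<le> (\<Sum>j<n. (\<alpha> j + l * da j) * x j)"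
      by (rule less.hyps[OF M_decrease[OF fin z1 z2 l(4)] feas_move[OF feas h1 h2 h3 h4 h5 h6 l(2) l(3)] supp])
    have IH2: "\<beta> + (-mu) * db \<le> (\<Sum>j<n. (\<alpha> j + (-mu) * da j) * x j)"
      by (rule less.hyps[OF M_decrease[OF fin z1 z2 mu(3)] feas_move[OF feas h1 h2 h3 h4 h5 h6 mu(1) mu(2)] supp])
    define Aa where "Aa = (\<Sum>j<n. \<alpha> j * x j)"
    define Dd where "Dd = (\<Sum>j<n. da j * x j)"
    have e1: "\<beta> + l * db \<le> Aa + l * Dd" using IH1 unfolding Aa_def Dd_def sum_move .
    have e2: "\<beta> - mu * db \<le> Aa - mu * Dd" using IH2 unfolding Aa_def Dd_def sum_move by simp
    have "mu * (\<beta> + l * db) \<le> mu * (Aa + l * Dd)" using e1 mu0(1) by (intro mult_left_mono) auto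
    moreover have "l * (\<beta> - mu * db) \<le> l * (Aa - mu * Dd)" using e2 l(1) by (intro mult_left_mono) auto
    ultimately have "(l + mu) * \<beta> \<le> (l + mu) * Aa" by (simp add: algebra_simps)
    then have "\<beta> \<le> Aa" using l(1) mu0(1) by (simp add: mult_le_cancel_left_pos)
    then show ?thesis unfolding Aa_def .
  qed
qed

theorem corollary1:
  fixes m n p r :: nat
    and A :: "nat \<Rightarrow> nat \<Rightarrow> real" and b :: "nat \<Rightarrow> real"
    and T :: "'a set"
    and D :: "'a \<Rightarrow> nat \<Rightarrow> nat \<Rightarrow> real" and d0 :: "'a \<Rightarrow> nat \<Rightarrow> real"
    and \<alpha> :: "nat \<Rightarrow> real" and \<beta> :: real and u v :: "'a \<Rightarrow> nat \<Rightarrow> real"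
  assumes "p \<le> n"
    and "\<forall>i<m. \<forall>j<n. A i j \<in> \<rat>" and "\<forall>i<m. b i \<in> \<rat>"
    and "finite T"
    and "\<forall>t\<in>T. \<forall>i<r. \<forall>j<n. D t i j \<in> \<rat>" and "\<forall>t\<in>T. \<forall>i<r. d0 t i \<in> \<rat>"
    and "cglp_feasible n (m + n + p) (Atil m n p A) (btil m n p b) r T D d0 \<alpha> \<beta> u v"
    and "\<not> cglp_basic n (m + n + p) (Atil m n p A) (btil m n p b) r T D d0 \<alpha> \<beta> u v"
    and "full_row_rank n (Atil m n p A) {j. j < m + n + p \<and> (\<exists>t\<in>T. u t j > 0)}"
  shows "\<forall>x\<in>regular_closure n (m + n + p) (Atil m n p A) (btil m n p b) r T D d0.
           \<beta> \<le> (\<Sum>j<n. \<alpha> j * x j)"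
proof
  fix x assume "x \<in> regular_closure n (m + n + p) (Atil m n p A) (btil m n p b) r T D d0"
  then have xc: "\<forall>\<alpha> \<beta>. regular_cut n (m + n + p) (Atil m n p A) (btil m n p b) r T D d0 \<alpha> \<beta> \<longrightarrow> \<beta> \<le> (\<Sum>j<n. \<alpha> j * x j)"
    unfolding regular_closure_def by blast
  have unit: "\<forall>j<n. \<exists>i<m + n + p. \<forall>k<n. Atil m n p A i k = (if k = j then 1 else 0)"
  proof (intro allI impI)
    fix j assume "j < n"
    then have "m + j < m + n + p \<and> (\<forall>k<n. Atil m n p A (m + j) k = (if k = j then 1 else 0))"
      by (simp add: Atil_def)
    then show "\<exists>i<m + n + p. \<forall>k<n. Atil m n p A i k = (if k = j then 1 else 0)" by blast
  qed
  show "\<beta> \<le> (\<Sum>j<n. \<alpha> j * x j)"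
    by (rule main[OF assms(4) unit _ assms(9) xc assms(7)]) auto
qed

end
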